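(* Let $f,g:\mathbb{R}^n\to\mathbb{R}$ be twice continuously differentiable, with $\lim_{|x|\to\infty}f(x)=+\infty$, and suppose $\nabla g(x)\neq 0$ for all $x\in\mathbb{R}^n$. Let $\zeta\in[0,1)$ and $x_0\in\{x:g(x)\le 0\}$. Then the trajectory $x(t;\zeta,x_0)$ converges to a connected subset of critical points of $f$. In particular, if the critical points of $f$ are isolated, then $\lim_{t\to T_{\zeta,x_0}^-}x(t;\zeta,x_0)=x_c$ for some critical point $x_c$ of $f$.
   Context: For $\zeta\in[0,1)$, $\mathbf{s}_\zeta(x)=-\frac{\nabla f(x)}{|\nabla f(x)|}-\zeta\frac{\nabla g(x)}{|\nabla g(x)|}$ ($|\cdot|$ Euclidean norm), defined on $E=\{x:\nabla f(x)\neq0,\ \nabla g(x)\neq 0\}$. The trajectory $x(t;\zeta,x_0)$ is the solution of $\frac{dx}{dt}=\mathbf{s}_\zeta(x)$, $x(0)=x_0$, and $[0,T_{\zeta,x_0})$ is its maximal interval of existence in $E$. *)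

theory Defs
  imports "HOL-Analysis.Analysis"
begin

definition grad :: "('a::euclidean_space \<Rightarrow> real) \<Rightarrow> 'a \<Rightarrow> 'a" where
  "grad f x = (THE v. (f has_derivative (\<lambda>h. v \<bullet> h)) (at x))"

definition twice_cont_diff :: "('a::euclidean_space \<Rightarrow> real) \<Rightarrow> bool" where
  "twice_cont_diff f \<longleftrightarrow> (\<forall>x. f differentiable at x) \<and>
     (\<exists>H :: 'a \<Rightarrow> 'a \<Rightarrow>\<^sub>L 'a. continuous_on UNIV H \<and>
        (\<forall>x. (grad f has_derivative blinfun_apply (H x)) (at x)))"

definition dom_E :: "('a::euclidean_space \<Rightarrow> real) \<Rightarrow> ('a \<Rightarrow> real) \<Rightarrow> 'a set" where
  "dom_E f g = {x. grad f x \<noteq> 0 \<and> grad g x \<noteq> 0}"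

definition sfield :: "('a::euclidean_space \<Rightarrow> real) \<Rightarrow> ('a \<Rightarrow> real) \<Rightarrow> real \<Rightarrow> 'a \<Rightarrow> 'a" where
  "sfield f g \<zeta> x = - (1 / norm (grad f x)) *\<^sub>R grad f x - (\<zeta> / norm (grad g x)) *\<^sub>R grad g x"

definition is_sol :: "('a::euclidean_space \<Rightarrow> real) \<Rightarrow> ('a \<Rightarrow> real) \<Rightarrow> real \<Rightarrow> 'a
    \<Rightarrow> (real \<Rightarrow> 'a) \<Rightarrow> ereal \<Rightarrow> bool" where
  "is_sol f g \<zeta> x0 x T \<longleftrightarrow> 0 < T \<and> x 0 = x0 \<and>
     (\<forall>t. 0 \<le> t \<and> ereal t < T \<longrightarrow>
        x t \<in> dom_E f g \<and>
        (x has_vector_derivative sfield f g \<zeta> (x t)) (at t within {s. 0 \<le> s \<and> ereal s < T}))"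

definition is_max_sol :: "('a::euclidean_space \<Rightarrow> real) \<Rightarrow> ('a \<Rightarrow> real) \<Rightarrow> real \<Rightarrow> 'a
    \<Rightarrow> (real \<Rightarrow> 'a) \<Rightarrow> ereal \<Rightarrow> bool" where
  "is_max_sol f g \<zeta> x0 x T \<longleftrightarrow> is_sol f g \<zeta> x0 x T \<and>
     (\<forall>y T'. is_sol f g \<zeta> x0 y T' \<and> (\<forall>t. 0 \<le> t \<and> ereal t < min T T' \<longrightarrow> y t = x t)
        \<longrightarrow> T' \<le> T)"

definition to_T :: "ereal \<Rightarrow> real filter" where
  "to_T T = (if T = \<infinity> then at_top else at_left (real_of_ereal T))"

end

theory Submission
  imports Defs
begin


lemma picard_local:
  fixes F :: "'a::euclidean_space \<Rightarrow> 'a"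
  assumes r: "r > 0" and M: "M > 0" and Lp: "L > 0"
   and bnd: "\<And>y. y \<in> cball p r \<Longrightarrow> norm (F y) \<le> M"
   and lip: "\<And>y w. y \<in> cball p r \<Longrightarrow> w \<in> cball p r \<Longrightarrow> norm (F y - F w) \<le> L * norm (y - w)"
  shows "\<exists>\<delta>>0. \<exists>z. z t0 = p \<and> (\<forall>t\<in>{t0..t0+\<delta>}. z t \<in> cball p r \<and>
            (z has_vector_derivative F (z t)) (at t within {t0..t0+\<delta>}))"
proof -
  define \<delta> where "\<delta> = min (r/M) (1/(2*L))"
  have d0: "\<delta> > 0" using r M Lp by (simp add: \<delta>_def)
  have dM: "M * \<delta> \<le> r" using M by (simp add: \<delta>_def min_def field_simps)
  have dL: "L * \<delta> \<le> 1/2" using Lp by (simp add: \<delta>_def min_def field_simps)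
  define c where "c t = max t0 (min (t0+\<delta>) t)" for t
  have c_in: "c t \<in> {t0..t0+\<delta>}" for t using d0 by (auto simp: c_def)
  have c_id: "t \<in> {t0..t0+\<delta>} \<Longrightarrow> c t = t" for t by (auto simp: c_def)
  have cont_c: "continuous_on UNIV c" unfolding c_def by (intro continuous_intros)
  have contF: "continuous_on (cball p r) F"
  proof (rule lipschitz_on_continuous_on)
    show "lipschitz_on L (cball p r) F" using lip Lp by (auto simp: lipschitz_on_def dist_norm)
  qed
  define S :: "(real \<Rightarrow>\<^sub>C 'a) set" where "S = PiC UNIV (\<lambda>_. cball p r)"
  have Sc: "complete S" unfolding S_def complete_eq_closed by (rule closed_PiC) auto
  have inS: "\<phi> \<in> S \<longleftrightarrow> (\<forall>t. apply_bcontfun \<phi> t \<in> cball p r)" for \<phi>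
    by (auto simp: S_def mem_PiC_iff)
  have hcont: "continuous_on A (\<lambda>u. F (apply_bcontfun \<phi> u))" if "\<phi> \<in> S" for \<phi> A
    using that inS
    by (intro continuous_on_compose2[OF contF]) (auto intro: continuous_on_subset)
  define G where "G \<phi> t = p + integral {t0..c t} (\<lambda>u. F (apply_bcontfun \<phi> u))" for \<phi> t
  have G_in: "G \<phi> t \<in> cball p r" if "\<phi> \<in> S" for \<phi> t
  proof -
    have "norm (integral {t0..c t} (\<lambda>u. F (apply_bcontfun \<phi> u))) \<le> M * (c t - t0)"
      using c_in[of t] that inS bnd by (intro integral_bound hcont) auto
    also have "\<dots> \<le> M * \<delta>" using c_in[of t] M by (intro mult_left_mono) auto
    finally show ?thesis using dM by (simp add: G_def dist_norm)
  qed
  have G_bc: "G \<phi> \<in> bcontfun" if "\<phi> \<in> S" for \<phi>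
  proof (rule bcontfun_normI)
    have "continuous_on {t0..t0+\<delta>} (\<lambda>s. integral {t0..s} (\<lambda>u. F (apply_bcontfun \<phi> u)))"
      by (intro indefinite_integral_continuous_1 integrable_continuous_real hcont that)
    then have "continuous_on UNIV (\<lambda>t. integral {t0..c t} (\<lambda>u. F (apply_bcontfun \<phi> u)))"
      using c_in by (intro continuous_on_compose2[OF _ cont_c]) auto
    then show "continuous_on UNIV (G \<phi>)" unfolding G_def by (intro continuous_intros)
    show "norm (G \<phi> t) \<le> norm p + r" for t
      using G_in[OF that, of t] norm_triangle_sub[of "G \<phi> t" p]
      by (auto simp: dist_norm norm_minus_commute)
  qed
  define \<Phi> where "\<Phi> \<phi> = Bcontfun (G \<phi>)" for \<phi>
  have PhiA: "apply_bcontfun (\<Phi> \<phi>) = G \<phi>" if "\<phi> \<in> S" for \<phi>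
    using G_bc[OF that] by (simp add: \<Phi>_def Bcontfun_inverse)
  have "\<exists>!\<phi>\<in>S. \<Phi> \<phi> = \<phi>"
  proof (rule Banach_fix[OF Sc])
    show "S \<noteq> {}" using inS[of "const_bcontfun p"] r by (auto simp: const_bcontfun.rep_eq)
    show "0 \<le> (1/2::real)" "(1/2::real) < 1" by auto
    show "\<Phi> ` S \<subseteq> S" using PhiA G_in inS by auto
    fix \<phi> \<psi> assume a: "\<phi> \<in> S" "\<psi> \<in> S"
    show "dist (\<Phi> \<phi>) (\<Phi> \<psi>) \<le> 1/2 * dist \<phi> \<psi>"
    proof (rule dist_bound)
      fix t
      have "dist (G \<phi> t) (G \<psi> t) = norm (integral {t0..c t} (\<lambda>u. F (apply_bcontfun \<phi> u) - F (apply_bcontfun \<psi> u)))"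
        unfolding G_def dist_norm
        by (subst integral_diff) (auto intro!: integrable_continuous_real hcont a)
      also have "\<dots> \<le> (L * dist \<phi> \<psi>) * (c t - t0)"
      proof (rule integral_bound)
        show "t0 \<le> c t" using c_in by auto
        show "continuous_on {t0..c t} (\<lambda>u. F (apply_bcontfun \<phi> u) - F (apply_bcontfun \<psi> u))"
          by (intro continuous_intros hcont a)
        fix u
        have "norm (F (apply_bcontfun \<phi> u) - F (apply_bcontfun \<psi> u)) \<le> L * norm (apply_bcontfun \<phi> u - apply_bcontfun \<psi> u)"
          using a inS lip by blast
        also have "\<dots> \<le> L * dist \<phi> \<psi>"
          using dist_bounded[of \<phi> u \<psi>] Lp by (simp add: dist_norm)
        finally show "norm (F (apply_bcontfun \<phi> u) - F (apply_bcontfun \<psi> u)) \<le> L * dist \<phi> \<psi>" .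
      qed
      also have "\<dots> \<le> (L * dist \<phi> \<psi>) * \<delta>"
        using c_in[of t] Lp by (intro mult_left_mono) auto
      also have "\<dots> = (L * \<delta>) * dist \<phi> \<psi>" by simp
      also have "\<dots> \<le> 1/2 * dist \<phi> \<psi>" using dL by (intro mult_right_mono) auto
      finally show "dist (apply_bcontfun (\<Phi> \<phi>) t) (apply_bcontfun (\<Phi> \<psi>) t) \<le> 1/2 * dist \<phi> \<psi>"
        using PhiA a by simp
    qed
  qed
  then obtain \<phi> where ph: "\<phi> \<in> S" "\<Phi> \<phi> = \<phi>" by blast
  define z where "z = apply_bcontfun \<phi>"
  have zG: "z t = G \<phi> t" for t using PhiA[OF ph(1)] ph(2) by (simp add: z_def)
  show ?thesis
  proof (intro exI conjI ballI)
    show "\<delta> > 0" by (rule d0)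
    show "z t0 = p" using zG[of t0] d0 by (simp add: G_def c_def)
    fix t assume t: "t \<in> {t0..t0+\<delta>}"
    show "z t \<in> cball p r" using ph(1) inS z_def by auto
    have "((\<lambda>u. p + integral {t0..u} (\<lambda>u. F (z u))) has_vector_derivative (0 + F (z t))) (at t within {t0..t0+\<delta>})"
      by (intro derivative_intros integral_has_vector_derivative t) (use hcont ph(1) z_def in auto)
    then have "((\<lambda>u. p + integral {t0..u} (\<lambda>u. F (z u))) has_vector_derivative F (z t)) (at t within {t0..t0+\<delta>})"
      by simp
    then show "(z has_vector_derivative F (z t)) (at t within {t0..t0+\<delta>})"
      by (rule has_vector_derivative_transform_within[OF _ d0 t]) (metis zG G_def c_id atLeastAtMost_iff z_def)
  qed
qed



lemma grad_deriv:
  fixes f :: "'a::euclidean_space \<Rightarrow> real"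
  assumes "f differentiable at x"
  shows "(f has_derivative (\<lambda>h. grad f x \<bullet> h)) (at x)"
proof -
  obtain f' where f': "(f has_derivative f') (at x)" using assms by (auto simp: differentiable_def)
  then have lin: "linear f'" using has_derivative_linear by blast
  define v where "v = (\<Sum>i\<in>Basis. f' i *\<^sub>R i)"
  have rep: "f' h = v \<bullet> h" for h
  proof -
    have "f' h = f' (\<Sum>i\<in>Basis. (h \<bullet> i) *\<^sub>R i)" by (simp add: euclidean_representation)
    also have "\<dots> = (\<Sum>i\<in>Basis. (h \<bullet> i) * f' i)"
      using lin by (simp add: linear_sum linear_cmul)
    also have "\<dots> = v \<bullet> h" unfolding v_def inner_sum_left
      by (auto intro!: sum.cong simp: inner_commute)
    finally show ?thesis .
  qed
  have f'eq: "f' = (\<lambda>h. v \<bullet> h)" using rep by auto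
  have "(THE w. (f has_derivative (\<lambda>h. w \<bullet> h)) (at x)) = v"
  proof (rule the_equality)
    show "(f has_derivative (\<lambda>h. v \<bullet> h)) (at x)" using f' f'eq by simp
    fix w assume "(f has_derivative (\<lambda>h. w \<bullet> h)) (at x)"
    then have "(\<lambda>h. w \<bullet> h) = (\<lambda>h. v \<bullet> h)" using f' f'eq has_derivative_unique by metis
    then show "w = v" by (metis vector_eq_rdot)
  qed
  then show ?thesis using f' f'eq by (simp add: grad_def)
qed

lemma tcd_diff: "twice_cont_diff f \<Longrightarrow> f differentiable at x"
  by (simp add: twice_cont_diff_def)

lemma tcd_grad: "twice_cont_diff f \<Longrightarrow> (f has_derivative (\<lambda>h. grad f x \<bullet> h)) (at x)"
  by (simp add: grad_deriv tcd_diff)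

lemma tcd_cont: "twice_cont_diff f \<Longrightarrow> continuous_on S f"
  by (meson continuous_at_imp_continuous_on differentiable_imp_continuous_within tcd_diff)

lemma tcd_grad_cont: "twice_cont_diff f \<Longrightarrow> continuous_on S (grad f)"
  unfolding twice_cont_diff_def
  by (metis continuous_at_imp_continuous_on has_derivative_continuous)

lemma tcd_grad_lip:
  fixes f :: "'a::euclidean_space \<Rightarrow> real"
  assumes "twice_cont_diff f"
  shows "\<exists>B>0. \<forall>y\<in>cball p r. \<forall>w\<in>cball p r. norm (grad f y - grad f w) \<le> B * norm (y - w)"
proof -
  obtain H :: "'a \<Rightarrow> 'a \<Rightarrow>\<^sub>L 'a" where Hc: "continuous_on UNIV H"
    and Hd: "\<And>x. (grad f has_derivative blinfun_apply (H x)) (at x)"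
    using assms by (auto simp: twice_cont_diff_def)
  have "compact (H ` cball p r)"
    by (intro compact_continuous_image continuous_on_subset[OF Hc]) auto
  then obtain B where B: "B > 0" "\<And>y. y \<in> cball p r \<Longrightarrow> norm (H y) \<le> B"
    using compact_imp_bounded bounded_pos by (metis image_eqI)
  have "norm (grad f y - grad f w) \<le> B * norm (y - w)" if "y \<in> cball p r" "w \<in> cball p r" for y w
  proof (rule differentiable_bound[OF convex_cball _ _ that])
    show "(grad f has_derivative blinfun_apply (H x)) (at x within cball p r)" for x
      using Hd has_derivative_at_withinI by blast
    show "onorm (blinfun_apply (H x)) \<le> B" if "x \<in> cball p r" for x
      using B that by (simp add: norm_blinfun.rep_eq[symmetric])
  qed
  then show ?thesis using B by blast
qed

lemma normalize_lip:
  fixes v w :: "'a::real_normed_vector"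
  assumes m: "m > 0" "norm v \<ge> m" "norm w \<ge> m"
  shows "norm ((1 / norm v) *\<^sub>R v - (1 / norm w) *\<^sub>R w) \<le> (2 / m) * norm (v - w)"
proof -
  have nv: "norm v > 0" "norm w > 0" using m by auto
  have eq: "(1 / norm v) *\<^sub>R v - (1 / norm w) *\<^sub>R w
      = (1 / norm v) *\<^sub>R (v - w) + ((norm w - norm v) / (norm v * norm w)) *\<^sub>R w"
  proof -
    have coef: "1/norm v = 1/norm w + (norm w - norm v) / (norm v * norm w)"
      using nv by (simp add: field_simps)
    have w1: "(1/norm v) *\<^sub>R w = (1/norm w) *\<^sub>R w + ((norm w - norm v) / (norm v * norm w)) *\<^sub>R w"
      by (metis coef scaleR_add_left)
    have "(1 / norm v) *\<^sub>R v - (1 / norm w) *\<^sub>R w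
        = (1 / norm v) *\<^sub>R (v - w) + ((1/norm v) *\<^sub>R w - (1 / norm w) *\<^sub>R w)"
      by (simp add: scaleR_diff_right)
    also have "\<dots> = (1 / norm v) *\<^sub>R (v - w) + ((norm w - norm v) / (norm v * norm w)) *\<^sub>R w"
      unfolding w1 by simp
    finally show ?thesis .
  qed
  have "norm (((norm w - norm v) / (norm v * norm w)) *\<^sub>R w) = \<bar>norm w - norm v\<bar> / norm v"
    using nv by (simp add: abs_mult)
  also have "\<dots> \<le> norm (v - w) / norm v"
    using nv by (intro divide_right_mono) (auto simp: norm_triangle_ineq3 abs_minus_commute)
  finally have a: "norm (((norm w - norm v) / (norm v * norm w)) *\<^sub>R w) \<le> norm (v - w) / norm v" .
  have "norm ((1 / norm v) *\<^sub>R v - (1 / norm w) *\<^sub>R w) \<le> norm (v - w) / norm v + norm (v - w) / norm v"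
    unfolding eq using a nv by (intro norm_triangle_le add_mono) auto
  also have "\<dots> = 2 * norm (v - w) / norm v" by simp
  also have "\<dots> \<le> 2 * norm (v - w) / m" using m nv by (intro divide_left_mono) auto
  finally show ?thesis by simp
qed

lemma hd_union:
  assumes "(f has_vector_derivative f') (at x within S)" "(f has_vector_derivative f') (at x within T)"
  shows "(f has_vector_derivative f') (at x within S \<union> T)"
proof -
  have bl: "bounded_linear (\<lambda>h. h *\<^sub>R f')" by (rule bounded_linear_scaleR_left)
  show ?thesis using assms
    unfolding has_vector_derivative_def has_derivative_within_alt
    apply (intro conjI allI impI bl)
    subgoal for e
      apply (elim conjE)
      apply (drule spec[of _ e], drule spec[of _ e])
      apply clarsimp
      subgoal for d1 d2 by (rule exI[of _ "min d1 d2"]) auto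
      done
    done
qed

lemma hd_local:
  assumes "(f has_vector_derivative f') (at x within S)" "d > 0"
    and "\<And>y. y \<in> T \<Longrightarrow> dist y x < d \<Longrightarrow> y \<in> S"
  shows "(f has_vector_derivative f') (at x within T)"
  using assms
  unfolding has_vector_derivative_def has_derivative_within_alt
  apply (intro conjI allI impI)
   apply blast
  subgoal for e
    apply (elim conjE)
    apply (drule spec[of _ e])
    apply clarsimp
    subgoal for d1 by (rule exI[of _ "min d d1"]) (auto simp: dist_norm)
    done
  done



locale flowctx =
  fixes f g :: "'a::euclidean_space \<Rightarrow> real" and \<zeta> :: real and x0 :: 'a
    and x :: "real \<Rightarrow> 'a" and T :: ereal
  assumes f2: "twice_cont_diff f" and g2: "twice_cont_diff g"
    and coer: "filterlim f at_top at_infinity"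
    and gnz: "\<forall>x. grad g x \<noteq> 0"
    and z0: "0 \<le> \<zeta>" and z1: "\<zeta> < 1"
    and ms: "is_max_sol f g \<zeta> x0 x T"
begin

definition D where "D = {t. 0 \<le> t \<and> ereal t < T}"
abbreviation s where "s \<equiv> sfield f g \<zeta>"
definition K where "K = {y. f y \<le> f x0}"

lemma sol: "is_sol f g \<zeta> x0 x T" using ms by (simp add: is_max_sol_def)
lemma T0: "0 < T" using sol by (simp add: is_sol_def)
lemma x00: "x 0 = x0" using sol by (simp add: is_sol_def)
lemma D0: "0 \<in> D" using T0 by (simp add: D_def zero_ereal_def)
lemma xE: "t \<in> D \<Longrightarrow> x t \<in> dom_E f g" using sol by (simp add: is_sol_def D_def)
lemma xd: "t \<in> D \<Longrightarrow> (x has_vector_derivative s (x t)) (at t within D)"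
  using sol by (simp add: is_sol_def D_def)

lemma convD: "convex D"
  unfolding convex_alt
proof (intro ballI allI impI)
  fix a b :: real and u :: real assume ab: "a \<in> D" "b \<in> D" and u: "0 \<le> u \<and> u \<le> 1"
  define c where "c = (1 - u) * a + u * b"
  have c1: "c \<le> max a b"
  proof -
    have "(1 - u) * a \<le> (1 - u) * max a b" using u by (intro mult_left_mono) auto
    moreover have "u * b \<le> u * max a b" using u by (intro mult_left_mono) auto
    ultimately show ?thesis unfolding c_def by (simp add: algebra_simps)
  qed
  have c0: "0 \<le> c" using ab u by (simp add: D_def c_def)
  have aT: "ereal a < T" and bT: "ereal b < T" using ab by (auto simp: D_def)
  have "c \<le> a \<or> c \<le> b" using c1 by linarith
  then have "ereal c \<le> ereal a \<or> ereal c \<le> ereal b" by simp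
  then have cT: "ereal c < T" using aT bT le_less_trans by blast
  show "(1 - u) *\<^sub>R a + u *\<^sub>R b \<in> D"
    using c0 cT by (simp add: D_def c_def)
qed

lemma sub_D: "t \<in> D \<Longrightarrow> u \<in> D \<Longrightarrow> {t..u} \<subseteq> D"
proof
  fix r assume t: "t \<in> D" and u: "u \<in> D" and r: "r \<in> {t..u}"
  have "ereal r \<le> ereal u" using r by simp
  moreover have "ereal u < T" using u by (simp add: D_def)
  ultimately have "ereal r < T" by (rule le_less_trans)
  moreover have "0 \<le> r" using t r by (simp add: D_def)
  ultimately show "r \<in> D" by (simp add: D_def)
qed

lemma contx: "continuous_on D x"
  using xd continuous_on_eq_continuous_within has_vector_derivative_continuous by blast

lemma s_bound: "norm (s y) \<le> 1 + \<zeta>"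
proof -
  have a: "norm ((1 / norm v) *\<^sub>R v) \<le> 1" for v :: 'a
    by (cases "v = 0") auto
  have b: "norm ((\<zeta> / norm v) *\<^sub>R v) \<le> \<zeta>" for v :: 'a
    using z0 by (cases "v = 0") auto
  have "norm (s y) \<le> norm ((1 / norm (grad f y)) *\<^sub>R grad f y) + norm ((\<zeta> / norm (grad g y)) *\<^sub>R grad g y)"
  proof -
    have "norm (- ((1 / norm (grad f y)) *\<^sub>R grad f y) - (\<zeta> / norm (grad g y)) *\<^sub>R grad g y)
       \<le> norm (- ((1 / norm (grad f y)) *\<^sub>R grad f y)) + norm ((\<zeta> / norm (grad g y)) *\<^sub>R grad g y)"
      by (rule norm_triangle_ineq4)
    then show ?thesis unfolding sfield_def by simp
  qed
  then show ?thesis using a b by (meson add_mono order_trans)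
qed

lemma grad_cont_at: "isCont (grad f) y" "isCont (grad g) y"
  using tcd_grad_cont[OF f2, of UNIV] tcd_grad_cont[OF g2, of UNIV]
  by (auto simp: continuous_on_eq_continuous_at)

lemma s_cont: "y \<in> dom_E f g \<Longrightarrow> isCont s y"
proof -
  assume "y \<in> dom_E f g"
  then have a: "norm (grad f y) \<noteq> 0" and b: "norm (grad g y) \<noteq> 0" by (auto simp: dom_E_def)
  have c1: "isCont (grad f) y" and c2: "isCont (grad g) y" by (rule grad_cont_at)+
  have n1: "isCont (\<lambda>y. norm (grad f y)) y" and n2: "isCont (\<lambda>y. norm (grad g y)) y"
    using c1 c2 by (auto intro: isCont_norm)
  have i1: "isCont (\<lambda>y. 1 / norm (grad f y)) y" using n1 a by (intro isCont_divide) auto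
  have i2: "isCont (\<lambda>y. \<zeta> / norm (grad g y)) y" using n2 b by (intro isCont_divide) auto
  have "isCont (\<lambda>y. - ((1 / norm (grad f y)) *\<^sub>R grad f y) - (\<zeta> / norm (grad g y)) *\<^sub>R grad g y) y"
    using i1 i2 c1 c2 by (intro isCont_diff isCont_minus isCont_scaleR) 
  then show ?thesis unfolding sfield_def[abs_def] by simp
qed

lemma inner_s: "y \<in> dom_E f g \<Longrightarrow> grad f y \<bullet> s y \<le> -(1 - \<zeta>) * norm (grad f y)"
proof -
  assume "y \<in> dom_E f g"
  then have a: "grad f y \<noteq> 0" and b: "grad g y \<noteq> 0" by (auto simp: dom_E_def)
  let ?a = "grad f y" and ?b = "grad g y"
  have e1: "?a \<bullet> s y = - (1 / norm ?a) * (?a \<bullet> ?a) - (\<zeta> / norm ?b) * (?a \<bullet> ?b)"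
    unfolding sfield_def by (simp add: inner_diff_right)
  have e2: "(1 / norm ?a) * (?a \<bullet> ?a) = norm ?a"
    using a by (simp add: power2_norm_eq_inner[symmetric] power2_eq_square)
  have "- (\<zeta> / norm ?b) * (?a \<bullet> ?b) \<le> (\<zeta> / norm ?b) * (norm ?a * norm ?b)"
  proof -
    have "- (?a \<bullet> ?b) \<le> norm ?a * norm ?b" using Cauchy_Schwarz_ineq2[of ?a ?b] by linarith
    then have "\<zeta> * (- (?a \<bullet> ?b)) \<le> \<zeta> * (norm ?a * norm ?b)" using z0 by (rule mult_left_mono)
    then have "\<zeta> * (- (?a \<bullet> ?b)) / norm ?b \<le> \<zeta> * (norm ?a * norm ?b) / norm ?b"
      by (rule divide_right_mono) simp
    then show ?thesis by simp
  qed
  then have "- norm ?a - (\<zeta> / norm ?b) * (?a \<bullet> ?b) \<le> - norm ?a + \<zeta> * norm ?a"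
    using b by simp
  moreover have "?a \<bullet> s y = - norm ?a - (\<zeta> / norm ?b) * (?a \<bullet> ?b)"
    using e1 e2 by simp
  ultimately show ?thesis by (simp add: algebra_simps)
qed

lemma fx_deriv: "t \<in> D \<Longrightarrow> ((\<lambda>r. f (x r)) has_real_derivative (grad f (x t) \<bullet> s (x t))) (at t within D)"
proof -
  assume t: "t \<in> D"
  have "(f has_derivative (\<lambda>h. grad f (x t) \<bullet> h)) (at (x t) within x ` D)"
    using tcd_grad[OF f2] has_derivative_at_withinI by blast
  from vector_derivative_diff_chain_within[OF xd[OF t] this]
  show ?thesis by (simp add: has_real_derivative_iff_has_vector_derivative o_def)
qed

lemma f_decr:
  assumes t: "t \<in> D" and u: "u \<in> D" and tu: "t \<le> u"
    and e: "\<And>r. r \<in> {t..u} \<Longrightarrow> norm (grad f (x r)) \<ge> e"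
  shows "f (x u) \<le> f (x t) - (1 - \<zeta>) * e * (u - t)"
proof -
  have "\<exists>r\<in>{t..u}. f (x u) - f (x t) = (\<lambda>h. (grad f (x r) \<bullet> s (x r)) * h) (u - t)"
  proof (rule mvt_very_simple[OF tu])
    fix r assume "t \<le> r" "r \<le> u"
    then have r: "r \<in> {t..u}" by auto
    then have "r \<in> D" using sub_D[OF t u] by auto
    then have "((\<lambda>r. f (x r)) has_real_derivative (grad f (x r) \<bullet> s (x r))) (at r within {t..u})"
      using DERIV_subset[OF fx_deriv sub_D[OF t u]] by blast
    then show "((\<lambda>r. f (x r)) has_derivative (\<lambda>h. (grad f (x r) \<bullet> s (x r)) * h)) (at r within {t..u})"
      by (simp add: has_field_derivative_def)
  qed
  then obtain r where r: "r \<in> {t..u}" and eq: "f (x u) - f (x t) = (u - t) * (grad f (x r) \<bullet> s (x r))"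
    by (auto simp: mult.commute)
  have "r \<in> D" using r sub_D[OF t u] by auto
  then have "grad f (x r) \<bullet> s (x r) \<le> - (1 - \<zeta>) * e"
  proof -
    have i: "grad f (x r) \<bullet> s (x r) \<le> -(1 - \<zeta>) * norm (grad f (x r))"
      using inner_s[OF xE[OF \<open>r \<in> D\<close>]] .
    have "(1 - \<zeta>) * e \<le> (1 - \<zeta>) * norm (grad f (x r))"
      using e[OF r] z1 by (intro mult_left_mono) auto
    then show ?thesis using i by linarith
  qed
  then have "(u - t) * (grad f (x r) \<bullet> s (x r)) \<le> (u - t) * (- (1 - \<zeta>) * e)"
    using tu by (intro mult_left_mono) auto
  then show ?thesis using eq by (simp add: algebra_simps)
qed

lemma x_lip: "t \<in> D \<Longrightarrow> u \<in> D \<Longrightarrow> norm (x t - x u) \<le> (1 + \<zeta>) * \<bar>t - u\<bar>"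
proof -
  assume t: "t \<in> D" and u: "u \<in> D"
  have "norm (x t - x u) \<le> (1 + \<zeta>) * norm (t - u)"
  proof (rule differentiable_bound[OF convD _ _ t u])
    fix r assume "r \<in> D"
    show "(x has_derivative (\<lambda>h. h *\<^sub>R s (x r))) (at r within D)"
      using xd[OF \<open>r \<in> D\<close>] unfolding has_vector_derivative_def .
    have "onorm (\<lambda>h::real. h *\<^sub>R s (x r)) = onorm (\<lambda>h::real. h) * norm (s (x r))"
      by (rule onorm_scaleR_left) (rule bounded_linear_ident)
    also have "\<dots> = norm (s (x r))" using onorm_id[where 'a=real] by (simp add: id_def)
    finally show "onorm (\<lambda>h::real. h *\<^sub>R s (x r)) \<le> 1 + \<zeta>" using s_bound by simp
  qed
  then show ?thesis by simp
qed

lemma compK: "compact K"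
proof -
  have "eventually (\<lambda>y. f y \<ge> f x0 + 1) at_infinity"
    using coer by (simp add: filterlim_at_top)
  then obtain b where b: "\<And>y. norm y \<ge> b \<Longrightarrow> f y \<ge> f x0 + 1"
    by (auto simp: eventually_at_infinity)
  have "K \<subseteq> cball 0 b"
  proof
    fix y assume "y \<in> K"
    then have "f y \<le> f x0" by (simp add: K_def)
    then have "\<not> norm y \<ge> b" using b[of y] by linarith
    then show "y \<in> cball 0 b" by simp
  qed
  then have "bounded K" using bounded_cball bounded_subset by blast
  moreover have "closed K" unfolding K_def
    by (intro closed_Collect_le tcd_cont[OF f2] continuous_intros)
  ultimately show ?thesis by (simp add: compact_eq_bounded_closed)
qed

lemma xK: "t \<in> D \<Longrightarrow> x t \<in> K"
proof -
  assume t: "t \<in> D"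
  then have "0 \<le> t" by (simp add: D_def)
  from f_decr[OF D0 t this, of 0] have "f (x t) \<le> f (x 0)" by simp
  then show ?thesis by (simp add: K_def x00)
qed

end


lemma conn_isolated:
  fixes C :: "'a::metric_space set"
  assumes C: "connected C" "C \<noteq> {}" "C \<subseteq> P"
    and iso: "\<forall>p. p \<in> P \<longrightarrow> (\<exists>e>0. \<forall>q. q \<in> P \<and> dist q p < e \<longrightarrow> q = p)"
  shows "\<exists>p. C = {p}"
proof -
  obtain p where p: "p \<in> C" using C by blast
  then obtain e where e: "e > 0" "\<And>q. q \<in> P \<Longrightarrow> dist q p < e \<Longrightarrow> q = p"
    using iso C by blast
  have "C \<inter> ball p e = {p}" using e p C(3) by (auto simp: dist_commute)
  moreover have "openin (top_of_set C) (C \<inter> ball p e)" by (rule openin_open_Int) simp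
  ultimately have o: "openin (top_of_set C) {p}" by simp
  have cp: "C \<inter> {p} = {p}" using p by auto
  have "closedin (top_of_set C) (C \<inter> {p})" by (rule closedin_closed_Int) simp
  then have c: "closedin (top_of_set C) {p}" unfolding cp .
  have "{p} = {} \<or> {p} = C" using C(1) o c unfolding connected_clopen by blast
  then show ?thesis by auto
qed

context flowctx begin

lemma concl:
  assumes C: "C \<noteq> {}" "connected C" "C \<subseteq> {p. grad f p = 0}"
    and lim: "((\<lambda>t. infdist (x t) C) \<longlongrightarrow> 0) F"
  shows "(\<exists>C. C \<noteq> {} \<and> connected C \<and> C \<subseteq> {p. grad f p = 0} \<and>
             ((\<lambda>t. infdist (x t) C) \<longlongrightarrow> 0) F)
       \<and> ((\<forall>p. grad f p = 0 \<longrightarrow> (\<exists>e>0. \<forall>q. grad f q = 0 \<and> dist q p < e \<longrightarrow> q = p))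
            \<longrightarrow> (\<exists>xc. grad f xc = 0 \<and> (x \<longlongrightarrow> xc) F))"
proof (intro conjI impI)
  show "\<exists>C. C \<noteq> {} \<and> connected C \<and> C \<subseteq> {p. grad f p = 0} \<and> ((\<lambda>t. infdist (x t) C) \<longlongrightarrow> 0) F"
    using C lim by (intro exI[of _ C]) simp
  assume iso: "\<forall>p. grad f p = 0 \<longrightarrow> (\<exists>e>0. \<forall>q. grad f q = 0 \<and> dist q p < e \<longrightarrow> q = p)"
  have iso': "\<forall>p. p \<in> {p. grad f p = 0} \<longrightarrow> (\<exists>e>0. \<forall>q. q \<in> {p. grad f p = 0} \<and> dist q p < e \<longrightarrow> q = p)"
    using iso by simp
  have "\<exists>p. C = {p}"
    by (rule conn_isolated[OF C(2) C(1) C(3) iso'])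
  then obtain p where p: "C = {p}" by blast
  have "grad f p = 0" using C(3) p by auto
  moreover have "(x \<longlongrightarrow> p) F"
  proof -
    have "((\<lambda>t. dist (x t) p) \<longlongrightarrow> 0) F" using lim p by simp
    then show ?thesis using tendsto_dist_iff by blast
  qed
  ultimately show "\<exists>xc. grad f xc = 0 \<and> (x \<longlongrightarrow> xc) F" by blast
qed

lemma D_inf: "T = \<infinity> \<Longrightarrow> D = {0..}"
  unfolding D_def by auto

lemma closedK: "closed K" using compK compact_imp_closed by blast

lemma grad_to0:
  assumes Tinf: "T = \<infinity>"
  shows "((\<lambda>t. norm (grad f (x t))) \<longlongrightarrow> 0) at_top"
proof (rule ccontr)
  assume "\<not> ?thesis"
  then obtain e where e: "e > 0" and ne: "\<not> eventually (\<lambda>t. norm (grad f (x t)) < e) at_top"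
    unfolding tendsto_iff by (auto simp: dist_real_def)
  have freq: "\<exists>t\<ge>N. norm (grad f (x t)) \<ge> e" for N
  proof (rule ccontr)
    assume "\<not> (\<exists>t\<ge>N. norm (grad f (x t)) \<ge> e)"
    then have "\<forall>t\<ge>N. norm (grad f (x t)) < e" by (meson not_le)
    then show False using ne unfolding eventually_at_top_linorder by blast
  qed
  have "uniformly_continuous_on K (grad f)"
    by (rule compact_uniformly_continuous[OF tcd_grad_cont[OF f2] compK])
  then obtain d where d: "d > 0" and dd: "\<And>y w. y \<in> K \<Longrightarrow> w \<in> K \<Longrightarrow> dist w y < d \<Longrightarrow> dist (grad f w) (grad f y) < e/2"
  proof -
    have "e/2 > 0" using e by simp
    then show ?thesis using that \<open>uniformly_continuous_on K (grad f)\<close>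
      unfolding uniformly_continuous_on_def by blast
  qed
  define h where "h = d / (2 * (1 + \<zeta>))"
  have h0: "h > 0" using d z0 by (simp add: h_def)
  have hd: "(1 + \<zeta>) * h < d"
  proof -
    have nz: "1 + \<zeta> > 0" using z0 by simp
    have "(1 + \<zeta>) * h = d / 2" unfolding h_def using nz by (simp add: field_simps)
    then show ?thesis using d by simp
  qed
  define c where "c = (1 - \<zeta>) * (e/2) * h"
  have c0: "c > 0" using z1 e h0 by (simp add: c_def)
  have step: "f (x (t + h)) \<le> f (x t) - c" if t: "t \<ge> 0" and nt: "norm (grad f (x t)) \<ge> e" for t
  proof -
    have tD: "t \<in> D" and uD: "t + h \<in> D" using t h0 D_inf[OF Tinf] by auto
    have "f (x (t + h)) \<le> f (x t) - (1 - \<zeta>) * (e/2) * (t + h - t)"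
    proof (rule f_decr[OF tD uD])
      show "t \<le> t + h" using h0 by simp
      fix r assume r: "r \<in> {t..t+h}"
      then have rD: "r \<in> D" using sub_D[OF tD uD] by auto
      have "norm (x r - x t) \<le> (1 + \<zeta>) * \<bar>r - t\<bar>" by (rule x_lip[OF rD tD])
      also have "\<dots> \<le> (1 + \<zeta>) * h" using r z0 by (intro mult_left_mono) auto
      finally have "dist (x r) (x t) < d" using hd by (simp add: dist_norm)
      then have "dist (grad f (x r)) (grad f (x t)) < e/2"
        using dd[OF xK[OF tD] xK[OF rD]] by simp
      then have "norm (grad f (x t)) - norm (grad f (x r)) < e/2"
        using norm_triangle_ineq3[of "grad f (x t)" "grad f (x r)"]
        by (simp add: dist_norm norm_minus_commute)
      then show "e/2 \<le> norm (grad f (x r))" using nt by linarith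
    qed
    then show ?thesis by (simp add: c_def)
  qed
  have Kne: "x0 \<in> K" by (simp add: K_def)
  obtain m0 where m0: "\<And>y. y \<in> K \<Longrightarrow> m0 \<le> f y"
  proof -
    have "\<exists>xm\<in>K. \<forall>y\<in>K. f xm \<le> f y"
      by (rule continuous_attains_inf[OF compK]) (use Kne tcd_cont[OF f2] in auto)
    then show ?thesis using that by blast
  qed
  define V where "V = (\<lambda>t. f (x t)) ` D"
  have Vne: "V \<noteq> {}" using D0 by (auto simp: V_def)
  have Vbdd: "bdd_below V" unfolding V_def bdd_below_def using m0 xK by blast
  obtain t1 where t1: "t1 \<in> D" "f (x t1) < Inf V + c"
    using cInf_lessD[OF Vne, of "Inf V + c"] c0 by (auto simp: V_def)
  obtain t where t: "t \<ge> t1" "norm (grad f (x t)) \<ge> e" using freq by blast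
  have t1p: "t1 \<ge> 0" using t1 D_inf[OF Tinf] by auto
  have tD: "t \<in> D" using t t1p D_inf[OF Tinf] by auto
  have "f (x t) \<le> f (x t1) - (1 - \<zeta>) * 0 * (t - t1)"
    by (rule f_decr[OF t1(1) tD t(1)]) simp
  then have "f (x t) \<le> f (x t1)" by simp
  moreover have "f (x (t + h)) \<le> f (x t) - c" using step t t1p by auto
  moreover have "Inf V \<le> f (x (t + h))"
    using Vbdd h0 tD D_inf[OF Tinf] by (intro cInf_lower) (auto simp: V_def)
  ultimately show False using t1 by linarith
qed

end


context flowctx begin

definition Cl where "Cl t = closure (x ` {t..})"
definition Om where "Om = \<Inter> (Cl ` {0..})"

lemma Cl_K: assumes Tinf: "T = \<infinity>" and t: "0 \<le> t" shows "Cl t \<subseteq> K"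
proof -
  have "x ` {t..} \<subseteq> K"
  proof
    fix y assume "y \<in> x ` {t..}"
    then obtain r where r: "r \<ge> t" "y = x r" by auto
    then have "r \<in> D" using t D_inf[OF Tinf] by auto
    then show "y \<in> K" using xK r by simp
  qed
  then show ?thesis unfolding Cl_def using closedK by (rule closure_minimal)
qed

lemma sub_lim:
  assumes Tinf: "T = \<infinity>" and tn: "\<And>n. tn n \<ge> real n"
  shows "\<exists>q\<in>Om. \<exists>r. strict_mono r \<and> ((\<lambda>k. x (tn (r k))) \<longlongrightarrow> q) sequentially"
proof -
  have inK: "\<forall>n. x (tn n) \<in> K"
  proof
    fix n
    have "tn n \<ge> 0" using tn[of n] of_nat_0_le_iff[of n] by linarith
    then have "tn n \<in> D" using D_inf[OF Tinf] by auto
    then show "x (tn n) \<in> K" by (rule xK)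
  qed
  obtain q r where q: "q \<in> K" and r: "strict_mono r" and lim: "((\<lambda>n. x (tn n)) \<circ> r) \<longlonglongrightarrow> q"
    using seq_compactE[OF compact_imp_seq_compact[OF compK] inK] by blast
  have lim': "((\<lambda>k. x (tn (r k))) \<longlongrightarrow> q) sequentially" using lim by (simp add: o_def)
  have "q \<in> Cl t" if t: "t \<in> {0..}" for t
  proof (rule Lim_in_closed_set[OF _ _ _ lim'])
    show "closed (Cl t)" unfolding Cl_def by simp
    show "sequentially \<noteq> bot" by simp
    show "\<forall>\<^sub>F k in sequentially. x (tn (r k)) \<in> Cl t"
    proof (rule eventually_sequentiallyI[of "nat \<lceil>t\<rceil>"])
      fix k assume k: "nat \<lceil>t\<rceil> \<le> k"
      have "t \<le> real k" using k by linarith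
      also have "\<dots> \<le> real (r k)" using seq_suble[OF r, of k] by simp
      also have "\<dots> \<le> tn (r k)" by (rule tn)
      finally have "tn (r k) \<in> {t..}" by simp
      then have "x (tn (r k)) \<in> x ` {t..}" by (rule imageI)
      then show "x (tn (r k)) \<in> Cl t" unfolding Cl_def by (rule subsetD[OF closure_subset])
    qed
  qed
  then have "q \<in> Om" unfolding Om_def by blast
  then show ?thesis using r lim' by blast
qed

lemma Om_ne: assumes Tinf: "T = \<infinity>" shows "Om \<noteq> {}"
  using sub_lim[OF Tinf, of real] by auto

lemma Om_conn: assumes Tinf: "T = \<infinity>" shows "connected Om"
  unfolding Om_def
proof (rule connected_chain_gen[of "Cl 0"])
  show "Cl 0 \<in> Cl ` {0..}" by simp
  have "bounded (Cl 0)" using bounded_subset[OF compact_imp_bounded[OF compK] Cl_K[OF Tinf]] by simp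
  then show "compact (Cl 0)" unfolding compact_eq_bounded_closed Cl_def by simp
  fix S assume "S \<in> Cl ` {0..}"
  then obtain t where t: "t \<ge> 0" "S = Cl t" by auto
  have "continuous_on {t..} x"
    using contx D_inf[OF Tinf] t by (auto intro: continuous_on_subset)
  moreover have "connected {t..}" by (rule convex_connected) simp
  ultimately have "connected (x ` {t..})" by (rule connected_continuous_image)
  then show "closed S \<and> connected S" using t unfolding Cl_def
    by (simp add: connected_imp_connected_closure)
next
  fix S S' assume "S \<in> Cl ` {0..} \<and> S' \<in> Cl ` {0..}"
  then obtain t u where tu: "S = Cl t" "S' = Cl u" by auto
  have mono: "Cl b \<subseteq> Cl a" if "a \<le> b" for a b
    unfolding Cl_def using that by (intro closure_mono image_mono) auto
  show "S \<subseteq> S' \<or> S' \<subseteq> S"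
  proof (cases "t \<le> u")
    case True then show ?thesis using mono tu by blast
  next
    case False then show ?thesis using mono tu by simp
  qed
qed

lemma Om_crit: assumes Tinf: "T = \<infinity>" and p: "p \<in> Om" shows "grad f p = 0"
proof (rule ccontr)
  assume ne: "grad f p \<noteq> 0"
  define e where "e = norm (grad f p)"
  have e: "e > 0" using ne by (simp add: e_def)
  have e2: "e/2 > 0" using e by simp
  have "eventually (\<lambda>t. dist (norm (grad f (x t))) 0 < e/2) at_top"
    using grad_to0[OF Tinf] e2 unfolding tendsto_iff by blast
  then obtain N where N: "\<And>t. t \<ge> N \<Longrightarrow> norm (grad f (x t)) < e/2"
    unfolding eventually_at_top_linorder by (auto simp: dist_real_def)
  define N' where "N' = max N 0"
  define A where "A = {y. norm (grad f y) \<le> e/2}"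
  have cA: "closed A" unfolding A_def
    by (intro closed_Collect_le continuous_on_norm tcd_grad_cont[OF f2] continuous_on_const)
  have "x ` {N'..} \<subseteq> A" using N by (force simp: A_def N'_def)
  then have "Cl N' \<subseteq> A" unfolding Cl_def using cA by (rule closure_minimal)
  moreover have "p \<in> Cl N'" using p unfolding Om_def N'_def by auto
  ultimately have "norm (grad f p) \<le> e/2" by (auto simp: A_def)
  then show False using e by (simp add: e_def)
qed

lemma Om_attr: assumes Tinf: "T = \<infinity>" shows "((\<lambda>t. infdist (x t) Om) \<longlongrightarrow> 0) at_top"
proof (rule ccontr)
  assume "\<not> ?thesis"
  then obtain e where e: "e > 0" and ne: "\<not> eventually (\<lambda>t. infdist (x t) Om < e) at_top"
    unfolding tendsto_iff by (auto simp: dist_real_def infdist_nonneg)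
  have freq: "\<exists>t. t \<ge> real n \<and> infdist (x t) Om \<ge> e" for n
  proof (rule ccontr)
    assume "\<not> (\<exists>t. t \<ge> real n \<and> infdist (x t) Om \<ge> e)"
    then have "\<forall>t\<ge>real n. infdist (x t) Om < e" by (meson not_le)
    then show False using ne unfolding eventually_at_top_linorder by blast
  qed
  define tn where "tn n = (SOME t. t \<ge> real n \<and> infdist (x t) Om \<ge> e)" for n
  have tn: "tn n \<ge> real n \<and> infdist (x (tn n)) Om \<ge> e" for n
    unfolding tn_def by (rule someI_ex) (rule freq)
  obtain q r where q: "q \<in> Om" and r: "strict_mono r" and lim: "((\<lambda>k. x (tn (r k))) \<longlongrightarrow> q) sequentially"
    using sub_lim[OF Tinf] tn by blast
  have "eventually (\<lambda>k. dist (x (tn (r k))) q < e) sequentially"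
    using lim e unfolding tendsto_iff by blast
  then obtain k where k: "dist (x (tn (r k))) q < e"
    unfolding eventually_sequentially by blast
  have "infdist (x (tn (r k))) Om \<le> infdist q Om + dist (x (tn (r k))) q"
    by (rule infdist_triangle)
  also have "\<dots> = dist (x (tn (r k))) q" using q by simp
  finally show False using k tn[of "r k"] by linarith
qed

end


context flowctx begin

lemma grad_near:
  fixes h :: "'a \<Rightarrow> real"
  assumes "twice_cont_diff h" "grad h xs \<noteq> 0"
  shows "\<exists>r>0. \<forall>y. dist y xs < r \<longrightarrow> norm (grad h y) \<ge> norm (grad h xs) / 2"
proof -
  have "isCont (grad h) xs"
    using tcd_grad_cont[OF assms(1), of UNIV] by (simp add: continuous_on_eq_continuous_at)
  moreover have "norm (grad h xs) / 2 > 0" using assms(2) by simp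
  ultimately obtain r where r: "r > 0" "\<And>y. dist y xs < r \<Longrightarrow> dist (grad h y) (grad h xs) < norm (grad h xs) / 2"
    unfolding continuous_at_eps_delta by blast
  have "norm (grad h y) \<ge> norm (grad h xs) / 2" if "dist y xs < r" for y
  proof -
    have "dist (grad h y) (grad h xs) < norm (grad h xs) / 2" using r(2) that by blast
    then have "norm (grad h xs) - norm (grad h y) < norm (grad h xs) / 2"
      using norm_triangle_ineq3[of "grad h xs" "grad h y"] by (simp add: dist_norm norm_minus_commute)
    then show ?thesis by linarith
  qed
  then show ?thesis using r(1) by blast
qed

lemma s_lip_local:
  assumes xs: "grad f xs \<noteq> 0"
  shows "\<exists>r>0. \<exists>L>0. cball xs r \<subseteq> dom_E f g \<and>
     (\<forall>y\<in>cball xs r. \<forall>w\<in>cball xs r. norm (s y - s w) \<le> L * norm (y - w))"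
proof -
  have gs: "grad g xs \<noteq> 0" using gnz by blast
  obtain r1 where r1: "r1 > 0" "\<And>y. dist y xs < r1 \<Longrightarrow> norm (grad f y) \<ge> norm (grad f xs) / 2"
    using grad_near[OF f2 xs] by blast
  obtain r2 where r2: "r2 > 0" "\<And>y. dist y xs < r2 \<Longrightarrow> norm (grad g y) \<ge> norm (grad g xs) / 2"
    using grad_near[OF g2 gs] by blast
  define m where "m = min (norm (grad f xs) / 2) (norm (grad g xs) / 2)"
  have m0: "m > 0" using xs gs by (simp add: m_def)
  define r where "r = min r1 r2 / 2"
  have r0: "r > 0" using r1 r2 by (simp add: r_def)
  have mf: "norm (grad f y) \<ge> m" and mg: "norm (grad g y) \<ge> m" if "y \<in> cball xs r" for y
  proof -
    have "dist y xs < r1" "dist y xs < r2" using that r1 r2 by (auto simp: r_def dist_commute)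
    then show "norm (grad f y) \<ge> m" "norm (grad g y) \<ge> m"
      using r1(2) r2(2) by (fastforce simp: m_def)+
  qed
  obtain Bf where Bf: "Bf > 0" "\<forall>y\<in>cball xs r. \<forall>w\<in>cball xs r. norm (grad f y - grad f w) \<le> Bf * norm (y - w)"
    using tcd_grad_lip[OF f2] by blast
  obtain Bg where Bg: "Bg > 0" "\<forall>y\<in>cball xs r. \<forall>w\<in>cball xs r. norm (grad g y - grad g w) \<le> Bg * norm (y - w)"
    using tcd_grad_lip[OF g2] by blast
  define L where "L = (2 / m) * Bf + \<zeta> * ((2 / m) * Bg) + 1"
  have L0: "L > 0" using m0 Bf Bg z0 by (simp add: L_def add_nonneg_pos)
  have sub: "cball xs r \<subseteq> dom_E f g"
  proof
    fix y assume "y \<in> cball xs r"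
    then have "norm (grad f y) \<ge> m" "norm (grad g y) \<ge> m" using mf mg by auto
    then show "y \<in> dom_E f g" using m0 by (auto simp: dom_E_def)
  qed
  have lip: "norm (s y - s w) \<le> L * norm (y - w)" if y: "y \<in> cball xs r" and w: "w \<in> cball xs r" for y w
  proof -
    define uf where "uf v = (1 / norm (grad f v)) *\<^sub>R grad f v" for v
    define ug where "ug v = (1 / norm (grad g v)) *\<^sub>R grad g v" for v
    have sf: "s v = - uf v - \<zeta> *\<^sub>R ug v" for v
      unfolding sfield_def uf_def ug_def by simp
    have "norm (uf y - uf w) \<le> (2 / m) * norm (grad f y - grad f w)"
      unfolding uf_def by (rule normalize_lip[OF m0 mf[OF y] mf[OF w]])
    also have "\<dots> \<le> (2 / m) * (Bf * norm (y - w))"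
      using Bf(2) y w m0 by (intro mult_left_mono) auto
    finally have a: "norm (uf y - uf w) \<le> (2 / m) * Bf * norm (y - w)" by simp
    have "norm (ug y - ug w) \<le> (2 / m) * norm (grad g y - grad g w)"
      unfolding ug_def by (rule normalize_lip[OF m0 mg[OF y] mg[OF w]])
    also have "\<dots> \<le> (2 / m) * (Bg * norm (y - w))"
      using Bg(2) y w m0 by (intro mult_left_mono) auto
    finally have b: "norm (ug y - ug w) \<le> (2 / m) * Bg * norm (y - w)" by simp
    have "s y - s w = - (uf y - uf w) - \<zeta> *\<^sub>R (ug y - ug w)"
      unfolding sf by (simp add: algebra_simps)
    then have "norm (s y - s w) \<le> norm (uf y - uf w) + \<zeta> * norm (ug y - ug w)"
      using norm_triangle_ineq4[of "- (uf y - uf w)" "\<zeta> *\<^sub>R (ug y - ug w)"] z0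
      by (simp add: norm_minus_commute)
    also have "\<dots> \<le> (2 / m) * Bf * norm (y - w) + \<zeta> * ((2 / m) * Bg * norm (y - w))"
      using a b z0 by (intro add_mono mult_left_mono) auto
    also have "\<dots> \<le> L * norm (y - w)"
      by (simp add: L_def algebra_simps)
    finally show ?thesis .
  qed
  show ?thesis using r0 L0 sub lip by blast
qed

end


context flowctx begin

lemma D_fin: "T = ereal \<tau> \<Longrightarrow> D = {0..<\<tau>}"
  unfolding D_def by auto

lemma fin_lim:
  assumes Tf: "T = ereal \<tau>"
  shows "\<exists>xs. (x \<longlongrightarrow> xs) (at_left \<tau>)"
proof -
  have tau: "\<tau> > 0" using T0 Tf by (simp add: zero_ereal_def)
  have "lipschitz_on (1 + \<zeta>) D x"
    unfolding lipschitz_on_def using z0 x_lip by (auto simp: dist_norm dist_real_def)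
  then have uc: "uniformly_continuous_on {0..<\<tau>} x"
    using lipschitz_on_uniformly_continuous D_fin[OF Tf] by metis
  have "\<tau> \<in> closure {0..<\<tau>}" using tau by simp
  then obtain l where l: "(x \<longlongrightarrow> l) (at \<tau> within {0..<\<tau>})"
    using uniformly_continuous_on_extension_at_closure[OF uc] by blast
  have "at \<tau> within {0..<\<tau>} = at \<tau> within {..<\<tau>}"
    by (rule at_within_nhd[of _ "{0<..}"]) (use tau in auto)
  then have "(x \<longlongrightarrow> l) (at_left \<tau>)" using l by simp
  then show ?thesis by blast
qed

lemma fin_crit:
  assumes Tf: "T = ereal \<tau>" and lim: "(x \<longlongrightarrow> xs) (at_left \<tau>)"
  shows "grad f xs = 0"
proof (rule ccontr)
  assume nz: "grad f xs \<noteq> 0"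
  have tau: "\<tau> > 0" using T0 Tf by (simp add: zero_ereal_def)
  have DF: "D = {0..<\<tau>}" by (rule D_fin[OF Tf])
  have xsE: "xs \<in> dom_E f g" using nz gnz by (simp add: dom_E_def)
  obtain r L where r: "r > 0" and L: "L > 0" and sub: "cball xs r \<subseteq> dom_E f g"
    and lip: "\<forall>y\<in>cball xs r. \<forall>w\<in>cball xs r. norm (s y - s w) \<le> L * norm (y - w)"
    using s_lip_local[OF nz] by blast
  have "\<exists>\<delta>>0. \<exists>z. z \<tau> = xs \<and> (\<forall>t\<in>{\<tau>..\<tau>+\<delta>}. z t \<in> cball xs r \<and>
            (z has_vector_derivative s (z t)) (at t within {\<tau>..\<tau>+\<delta>}))"
  proof (rule picard_local[OF r _ L])
    show "(2::real) > 0" by simp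
    show "norm (s y) \<le> 2" for y using s_bound[of y] z1 by simp
    show "norm (s y - s w) \<le> L * norm (y - w)" if "y \<in> cball xs r" "w \<in> cball xs r" for y w
      using lip that by blast
  qed
  then obtain \<delta> z where d: "\<delta> > 0" and z0': "z \<tau> = xs"
    and zin: "\<And>t. t \<in> {\<tau>..\<tau>+\<delta>} \<Longrightarrow> z t \<in> cball xs r"
    and zd: "\<And>t. t \<in> {\<tau>..\<tau>+\<delta>} \<Longrightarrow> (z has_vector_derivative s (z t)) (at t within {\<tau>..\<tau>+\<delta>})"
    by blast
  define y where "y t = (if t < \<tau> then x t else z t)" for t
  have yx: "t < \<tau> \<Longrightarrow> y t = x t" for t by (simp add: y_def)
  have yz: "t \<ge> \<tau> \<Longrightarrow> y t = z t" for t by (simp add: y_def)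
  have ytau: "y \<tau> = xs" using yz[of \<tau>] z0' by simp
  have sE: "continuous_on (dom_E f g) s"
    using s_cont by (simp add: continuous_at_imp_continuous_on)
  have ycont: "continuous_on {0..\<tau>} y"
    unfolding continuous_on_eq_continuous_within
  proof
    fix t assume t: "t \<in> {0..\<tau>}"
    show "continuous (at t within {0..\<tau>}) y"
    proof (cases "t < \<tau>")
      case True
      have eq: "at t within {0..\<tau>} = at t within D"
        unfolding DF by (rule at_within_nhd[of _ "{..<\<tau>}"]) (use True in auto)
      have "t \<in> D" using True t DF by auto
      then have "continuous (at t within D) x" using contx continuous_on_eq_continuous_within by blast
      then have "continuous (at t within {0..\<tau>}) x" using eq by simp
      then show ?thesis
        by (rule continuous_transform_within[of _ _ _ "\<tau> - t"]) (use True t in \<open>auto simp: yx dist_real_def\<close>)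
    next
      case False
      then have tt: "t = \<tau>" using t by auto
      have "eventually (\<lambda>u. x u = y u) (at_left \<tau>)"
        by (auto simp: eventually_at_left_field yx intro!: exI[of _ 0] tau)
      then have "(y \<longlongrightarrow> xs) (at_left \<tau>)" using lim Lim_transform_eventually by blast
      then have "(y \<longlongrightarrow> y \<tau>) (at \<tau> within {0..\<tau>})" using ytau at_within_Icc_at_left[OF tau] by simp
      then show ?thesis using tt by (simp add: continuous_within)
    qed
  qed
  have yE0: "y t \<in> dom_E f g" if "t \<in> {0..\<tau>}" for t
  proof (cases "t < \<tau>")
    case True then show ?thesis using that xE DF yx by auto
  next
    case False then show ?thesis using that ytau xsE by auto
  qed
  have sycont: "continuous_on {0..\<tau>} (\<lambda>t. s (y t))"
    by (rule continuous_on_compose2[OF sE ycont]) (use yE0 in auto)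
  define I where "I t = x0 + integral {0..t} (\<lambda>u. s (y u))" for t
  have Ix: "I t = x t" if t: "t \<in> {0..<\<tau>}" for t
  proof -
    have "((\<lambda>u. s (x u)) has_integral (x t - x 0)) {0..t}"
    proof (rule fundamental_theorem_of_calculus)
      show "0 \<le> t" using t by simp
      fix u assume u: "u \<in> {0..t}"
      have "{0..t} \<subseteq> D" using t DF by auto
      moreover have "u \<in> D" using u t DF by auto
      ultimately show "(x has_vector_derivative s (x u)) (at u within {0..t})"
        using xd has_vector_derivative_within_subset by blast
    qed
    then have "integral {0..t} (\<lambda>u. s (x u)) = x t - x0" using x00 by (simp add: integral_unique)
    moreover have "integral {0..t} (\<lambda>u. s (y u)) = integral {0..t} (\<lambda>u. s (x u))"
      by (rule integral_cong) (use t in \<open>auto simp: yx\<close>)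
    ultimately show ?thesis by (simp add: I_def)
  qed
  have Icont: "continuous_on {0..\<tau>} I"
    unfolding I_def
    by (intro continuous_intros indefinite_integral_continuous_1 integrable_continuous_real sycont)
  have "(I \<longlongrightarrow> I \<tau>) (at \<tau> within {0..\<tau>})"
    using Icont tau by (simp add: continuous_on_eq_continuous_within continuous_within)
  then have "(I \<longlongrightarrow> I \<tau>) (at_left \<tau>)" using at_within_Icc_at_left[OF tau] by simp
  moreover have "eventually (\<lambda>u. I u = x u) (at_left \<tau>)"
    using tau by (auto simp: eventually_at_left_field Ix intro!: exI[of _ 0])
  ultimately have "(x \<longlongrightarrow> I \<tau>) (at_left \<tau>)" using Lim_transform_eventually by blast
  then have Itau: "I \<tau> = xs" using lim tendsto_unique trivial_limit_at_left_real by blast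
  have Iy: "I t = y t" if "t \<in> {0..\<tau>}" for t
  proof (cases "t < \<tau>")
    case True then show ?thesis using that Ix yx by auto
  next
    case False then have "t = \<tau>" using that by auto
    then show ?thesis using Itau ytau by simp
  qed
  have dl: "(y has_vector_derivative s (y t)) (at t within {0..\<tau>})" if t: "t \<in> {0..\<tau>}" for t
  proof -
    have "((\<lambda>u. integral {0..u} (\<lambda>u. s (y u))) has_vector_derivative s (y t)) (at t within {0..\<tau>})"
      by (rule integral_has_vector_derivative[OF sycont t])
    then have "((\<lambda>u. x0 + integral {0..u} (\<lambda>u. s (y u))) has_vector_derivative (0 + s (y t))) (at t within {0..\<tau>})"
      by (intro derivative_intros)
    then have "(I has_vector_derivative s (y t)) (at t within {0..\<tau>})"
      unfolding I_def by simp
    then show ?thesis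
      by (rule has_vector_derivative_transform_within[OF _ zero_less_one t]) (use Iy in auto)
  qed
  have dr: "(y has_vector_derivative s (y t)) (at t within {\<tau>..\<tau>+\<delta>})" if t: "t \<in> {\<tau>..\<tau>+\<delta>}" for t
  proof -
    have "(z has_vector_derivative s (y t)) (at t within {\<tau>..\<tau>+\<delta>})" using zd[OF t] yz t by simp
    then show ?thesis
      by (rule has_vector_derivative_transform_within[OF _ zero_less_one t]) (use yz in auto)
  qed
  define D' where "D' = {u. 0 \<le> u \<and> ereal u < ereal (\<tau> + \<delta>)}"
  have D'eq: "D' = {0..<\<tau>+\<delta>}" by (auto simp: D'_def)
  have sol': "is_sol f g \<zeta> x0 y (ereal (\<tau> + \<delta>))"
    unfolding is_sol_def
  proof (intro conjI allI impI)
    show "0 < ereal (\<tau> + \<delta>)" using tau d by simp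
    show "y 0 = x0" using tau x00 yx by simp
    fix t assume t: "0 \<le> t \<and> ereal t < ereal (\<tau> + \<delta>)"
    show "y t \<in> dom_E f g"
    proof (cases "t < \<tau>")
      case True then show ?thesis using yE0 t by auto
    next
      case False then show ?thesis using zin[of t] sub yz t by auto
    qed
    have tt: "t \<in> {0..<\<tau>+\<delta>}" using t by auto
    have seteq: "{s. 0 \<le> s \<and> ereal s < ereal (\<tau> + \<delta>)} = {0..<\<tau>+\<delta>}" by auto
    have "(y has_vector_derivative s (y t)) (at t within {0..<\<tau>+\<delta>})"
    proof (cases "t < \<tau>")
      case True
      have "t \<in> {0..\<tau>}" using True t by auto
      from hd_local[OF dl[OF this], of "\<tau> - t" "{0..<\<tau>+\<delta>}"]
      show ?thesis using True t by (auto simp: dist_real_def)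
    next
      case False
      show ?thesis
      proof (cases "t = \<tau>")
        case True
        have "(y has_vector_derivative s (y t)) (at t within {0..\<tau>} \<union> {\<tau>..\<tau>+\<delta>})"
          using hd_union[OF dl dr] True tau d by auto
        then show ?thesis by (rule has_vector_derivative_within_subset) auto
      next
        case False
        then have tg: "t > \<tau>" using \<open>\<not> t < \<tau>\<close> by auto
        have "t \<in> {\<tau>..\<tau>+\<delta>}" using tg tt by auto
        from hd_local[OF dr[OF this], of "t - \<tau>" "{0..<\<tau>+\<delta>}"]
        show ?thesis using tg tt by (auto simp: dist_real_def)
      qed
    qed
    then show "(y has_vector_derivative s (y t)) (at t within {s. 0 \<le> s \<and> ereal s < ereal (\<tau> + \<delta>)})"
      unfolding seteq .
  qed
  have agree: "\<forall>t. 0 \<le> t \<and> ereal t < min T (ereal (\<tau> + \<delta>)) \<longrightarrow> y t = x t"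
    using Tf d by (auto simp: yx min_def split: if_splits)
  have "ereal (\<tau> + \<delta>) \<le> T" using ms sol' agree unfolding is_max_sol_def by blast
  then show False using Tf d by simp
qed

end

theorem theorem5p7:
  fixes f g :: "'a::euclidean_space \<Rightarrow> real"
    and \<zeta> :: real and x0 :: 'a and x :: "real \<Rightarrow> 'a" and T :: ereal
  assumes "twice_cont_diff f" and "twice_cont_diff g"
    and "filterlim f at_top at_infinity"
    and "\<forall>x. grad g x \<noteq> 0"
    and "0 \<le> \<zeta>" and "\<zeta> < 1"
    and "g x0 \<le> 0"
    and "is_max_sol f g \<zeta> x0 x T"
  shows "(\<exists>C. C \<noteq> {} \<and> connected C \<and> C \<subseteq> {p. grad f p = 0} \<and>
             ((\<lambda>t. infdist (x t) C) \<longlongrightarrow> 0) (to_T T))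
       \<and> ((\<forall>p. grad f p = 0 \<longrightarrow> (\<exists>e>0. \<forall>q. grad f q = 0 \<and> dist q p < e \<longrightarrow> q = p))
            \<longrightarrow> (\<exists>xc. grad f xc = 0 \<and> (x \<longlongrightarrow> xc) (to_T T)))"
proof -
  interpret flowctx f g \<zeta> x0 x T
    using assms by (unfold_locales) auto
  show ?thesis
  proof (cases "T = \<infinity>")
    case True
    then have tt: "to_T T = at_top" by (simp add: to_T_def)
    have "Om \<subseteq> {p. grad f p = 0}" using Om_crit[OF True] by blast
    from concl[OF Om_ne[OF True] Om_conn[OF True] this Om_attr[OF True]]
    show ?thesis unfolding tt .
  next
    case False
    obtain \<tau> where Tf: "T = ereal \<tau>" using False T0 by (cases T) auto
    then have tt: "to_T T = at_left \<tau>" by (simp add: to_T_def)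
    obtain xs where lim: "(x \<longlongrightarrow> xs) (at_left \<tau>)" using fin_lim[OF Tf] by blast
    have cr: "grad f xs = 0" by (rule fin_crit[OF Tf lim])
    have "((\<lambda>t. infdist (x t) {xs}) \<longlongrightarrow> 0) (at_left \<tau>)"
      using lim tendsto_dist_iff[of x xs "at_left \<tau>"] by simp
    from concl[OF _ _ _ this] cr
    show ?thesis unfolding tt by simp
  qed
qed

end
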